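(* Consider the following insertion-only procedure for maintaining a coloring of a set $S$ of objects, where $S$ is partitioned into sets $S_0,\ldots,S_\ell$, $\ell=\lceil\log n\rceil$, each in one of the states empty, full, or in migration, and where for each $i$ there are $\ell-i+1$ color sets $C(i,t)$, $0\le t\le \ell-i$, each of $\gamma_{\mathrm{um}}(2^i)$ colors. To insert an object $s$: (1) let $i$ be the smallest index with $S_i$ empty (if $i=\ell+1$ a new set is introduced and $\ell$ is redefined); (2) set $S_i:=\{s\}\cup S_0\cup\cdots\cup S_{i-1}$, mark $S_0,\ldots,S_{i-1}$ empty and $S_i$ in migration; (3) take an unused color set $C(i,t)$ and compute a unimax coloring of $S_i$ with it, whose colors are called final colors; only $s$ is given its final color now; (4) for each set $S_k$ in migration, recolor to its final color one object of $S_k$ whose current color differs from its final color and whose final color is maximal among such objects; if all objects of $S_k$ now have their final color, mark $S_k$ full. Then whenever an object is inserted and the first empty set is $S_i$, the sets $S_0,\ldots,S_{i-1}$ are full.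
   Context: Initially $S$ is empty and all sets are empty. A unimax coloring of a set of objects (regions with respect to points, or points with respect to ranges) is a coloring by integers such that for every point (resp. range) $q$ related to at least one object, the maximum color among the objects related to $q$ is attained by exactly one of them. $\gamma_{\mathrm{um}}$ is a non-decreasing function such that every $m$ objects of the family admit a unimax coloring with $\gamma_{\mathrm{um}}(m)$ colors. *)

theory Defs
  imports Complex_Main
begin

text \<open>A unimax coloring of a finite set X of objects with respect to the relation rel
  (rel q x: point/range q is related to object x): for every q related to at least one
  object of X, the maximum color among the objects of X related to q is attained by
  exactly one of them.\<close>
definition unimax :: "('q \<Rightarrow> 'a \<Rightarrow> bool) \<Rightarrow> 'a set \<Rightarrow> ('a \<Rightarrow> int) \<Rightarrow> bool" where
  "unimax rel X c \<longleftrightarrow>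
     (\<forall>q. (\<exists>x\<in>X. rel q x) \<longrightarrow>
        (\<exists>!x. x \<in> X \<and> rel q x \<and> c x = Max (c ` {y\<in>X. rel q y})))"

datatype status = Empty | Full | Migr

text \<open>State of the procedure: current value of ell, the sets S_j, their states,
  the current color of every object and the final color of every object
  (w.r.t. the unimax coloring computed for the set containing it).\<close>
record 'a st =
  lev  :: nat
  sets :: "nat \<Rightarrow> 'a set"
  stat :: "nat \<Rightarrow> status"
  cur  :: "'a \<Rightarrow> int"
  fin  :: "'a \<Rightarrow> int"

definition objs :: "('a, 'b) st_scheme \<Rightarrow> 'a set" where
  "objs \<sigma> = (\<Union>j\<le>lev \<sigma>. sets \<sigma> j)"

definition first_empty :: "('a, 'b) st_scheme \<Rightarrow> nat" where
  "first_empty \<sigma> = (if \<exists>i\<le>lev \<sigma>. stat \<sigma> i = Empty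
                      then (LEAST i. i \<le> lev \<sigma> \<and> stat \<sigma> i = Empty)
                      else Suc (lev \<sigma>))"

definition init_st :: "nat \<Rightarrow> 'a st" where
  "init_st n = \<lparr> lev = nat \<lceil>log 2 (real n)\<rceil>, sets = (\<lambda>_. {}), stat = (\<lambda>_. Empty),
                 cur = (\<lambda>_. 0), fin = (\<lambda>_. 0) \<rparr>"

text \<open>C i t is the color set C(i,t).  Nondeterminism: choice of the unused color set,
  of the unimax coloring, and of the recolored object among ties.\<close>
definition insert_step ::
  "('q \<Rightarrow> 'a \<Rightarrow> bool) \<Rightarrow> (nat \<Rightarrow> nat \<Rightarrow> int set) \<Rightarrow> 'a \<Rightarrow> 'a st \<Rightarrow> 'a st \<Rightarrow> bool" where
  "insert_step rel C s \<sigma> \<sigma>' \<longleftrightarrow>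
    s \<notin> objs \<sigma> \<and>
    (let i = first_empty \<sigma>;
         L = max (lev \<sigma>) i;
         X = insert s (\<Union>j<i. sets \<sigma> j);
         sets1 = (\<lambda>j. if j < i then {} else if j = i then X else sets \<sigma> j);
         stat1 = (\<lambda>j. if j < i then Empty else if j = i then Migr else stat \<sigma> j)
     in \<exists>t f pick.
          t \<le> L - i \<and>
          (\<forall>x\<in>objs \<sigma>. cur \<sigma> x \<notin> C i t) \<and>
          unimax rel X f \<and> f ` X \<subseteq> C i t \<and>
          (let fin1 = (\<lambda>x. if x \<in> X then f x else fin \<sigma> x);
               cur1 = (cur \<sigma>)(s := f s);
               D = (\<lambda>k. {x \<in> sets1 k. cur1 x \<noteq> fin1 x});
               cur2 = (\<lambda>x. if \<exists>k\<le>L. pick k = Some x then fin1 x else cur1 x)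
           in (\<forall>k. (pick k = None) \<longleftrightarrow> (k > L \<or> stat1 k \<noteq> Migr \<or> D k = {})) \<and>
              (\<forall>k x. pick k = Some x \<longrightarrow> x \<in> D k \<and> (\<forall>y\<in>D k. fin1 y \<le> fin1 x)) \<and>
              \<sigma>' = \<lparr> lev = L, sets = sets1,
                     stat = (\<lambda>k. if stat1 k = Migr \<and> (\<forall>x\<in>sets1 k. cur2 x = fin1 x)
                                 then Full else stat1 k),
                     cur = cur2, fin = fin1 \<rparr>))"

definition reachable ::
  "('q \<Rightarrow> 'a \<Rightarrow> bool) \<Rightarrow> (nat \<Rightarrow> nat \<Rightarrow> int set) \<Rightarrow> nat \<Rightarrow> 'a st \<Rightarrow> bool" where
  "reachable rel C n \<sigma> \<longleftrightarrow>
     (\<lambda>a b. \<exists>s. insert_step rel C s a b)\<^sup>*\<^sup>* (init_st n) \<sigma>"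

end

theory Submission
  imports Defs
begin

definition wrong :: "'a st \<Rightarrow> nat \<Rightarrow> 'a set" where
  "wrong \<sigma> j = {x \<in> sets \<sigma> j. cur \<sigma> x \<noteq> fin \<sigma> x}"

definition Inv :: "'a st \<Rightarrow> bool" where
  "Inv \<sigma> \<longleftrightarrow> (\<forall>j. stat \<sigma> j = Empty \<longrightarrow> sets \<sigma> j = {}) \<and>
    (\<forall>j. stat \<sigma> j \<noteq> Empty \<longrightarrow> finite (sets \<sigma> j) \<and> card (sets \<sigma> j) = 2^j) \<and>
    (\<forall>j. lev \<sigma> < j \<longrightarrow> stat \<sigma> j = Empty) \<and>
    (\<forall>j k. j \<noteq> k \<longrightarrow> sets \<sigma> j \<inter> sets \<sigma> k = {}) \<and>
    (\<forall>j. stat \<sigma> j = Migr \<longrightarrow> wrong \<sigma> j \<noteq> {} \<and>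
        card (wrong \<sigma> j) + (\<Sum>k<j. card (sets \<sigma> k)) < 2^j)"

lemma sum_pow2: "Suc (\<Sum>k<i. (2::nat)^k) = 2^i"
  by (induction i) auto

lemma fe_below: "k < first_empty \<sigma> \<Longrightarrow> stat \<sigma> k \<noteq> Empty"
proof (cases "\<exists>i\<le>lev \<sigma>. stat \<sigma> i = Empty")
  case True
  then obtain w where w: "w \<le> lev \<sigma>" "stat \<sigma> w = Empty" by blast
  assume k: "k < first_empty \<sigma>"
  hence k2: "k < (LEAST i. i \<le> lev \<sigma> \<and> stat \<sigma> i = Empty)" using True by (simp add: first_empty_def)
  have "(LEAST i. i \<le> lev \<sigma> \<and> stat \<sigma> i = Empty) \<le> w" using w by (intro Least_le) simp
  with k2 w have "k \<le> lev \<sigma>" by simp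
  with not_less_Least[OF k2] show ?thesis by blast
next
  case False
  assume "k < first_empty \<sigma>"
  moreover have "first_empty \<sigma> = Suc (lev \<sigma>)" unfolding first_empty_def by (rule if_not_P[OF False])
  ultimately have "k \<le> lev \<sigma>" by simp
  with False show ?thesis by blast
qed

lemma fe_at: "\<forall>j. lev \<sigma> < j \<longrightarrow> stat \<sigma> j = Empty \<Longrightarrow> stat \<sigma> (first_empty \<sigma>) = Empty"
proof (cases "\<exists>i\<le>lev \<sigma>. stat \<sigma> i = Empty")
  case True
  then show ?thesis unfolding first_empty_def
    using LeastI_ex[of "\<lambda>i. i \<le> lev \<sigma> \<and> stat \<sigma> i = Empty"] by auto
qed (auto simp: first_empty_def)

lemma fe_le: "first_empty \<sigma> \<le> Suc (lev \<sigma>)"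
proof (cases "\<exists>i\<le>lev \<sigma>. stat \<sigma> i = Empty")
  case True
  then obtain w where w: "w \<le> lev \<sigma>" "stat \<sigma> w = Empty" by blast
  have "(LEAST i. i \<le> lev \<sigma> \<and> stat \<sigma> i = Empty) \<le> w" using w by (intro Least_le) simp
  then show ?thesis using True w by (simp add: first_empty_def)
qed (auto simp: first_empty_def)

lemma init_inv: "Inv (init_st n)"
  by (simp add: Inv_def init_st_def wrong_def)

lemma inv_final:
  assumes "Inv \<sigma>" "j < first_empty \<sigma>"
  shows "stat \<sigma> j = Full"
proof -
  have ne: "\<And>k. k \<le> j \<Longrightarrow> stat \<sigma> k \<noteq> Empty" using fe_below[of _ \<sigma>] assms(2) by (meson le_less_trans)
  show ?thesis
  proof (cases "stat \<sigma> j")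
    case Migr
    with assms(1) have w: "wrong \<sigma> j \<noteq> {}" "card (wrong \<sigma> j) + (\<Sum>k<j. card (sets \<sigma> k)) < 2^j"
      by (auto simp: Inv_def)
    have "finite (sets \<sigma> j)" using assms(1) ne[of j] by (auto simp: Inv_def)
    hence "finite (wrong \<sigma> j)" by (simp add: wrong_def)
    with w(1) have c: "card (wrong \<sigma> j) \<ge> 1" by (simp add: Suc_le_eq card_gt_0_iff)
    have "(\<Sum>k<j. card (sets \<sigma> k)) = (\<Sum>k<j. 2^k)"
      using assms(1) ne by (intro sum.cong) (auto simp: Inv_def)
    with w(2) c sum_pow2[of j] show ?thesis by simp
  qed (use ne in auto)
qed

lemma step_inv:
  assumes inv: "Inv \<sigma>" and st: "insert_step rel C s \<sigma> \<sigma>'"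
  shows "Inv \<sigma>'"
proof -
  define i where "i = first_empty \<sigma>"
  define L where "L = max (lev \<sigma>) i"
  define X where "X = insert s (\<Union>j<i. sets \<sigma> j)"
  define sets1 where "sets1 = (\<lambda>j. if j < i then {} else if j = i then X else sets \<sigma> j)"
  define stat1 where "stat1 = (\<lambda>j. if j < i then Empty else if j = i then Migr else stat \<sigma> j)"
  have sn: "s \<notin> objs \<sigma>" using st by (simp add: insert_step_def)
  have "\<exists>t f pick. t \<le> L - i \<and>
          (\<forall>x\<in>objs \<sigma>. cur \<sigma> x \<notin> C i t) \<and>
          unimax rel X f \<and> f ` X \<subseteq> C i t \<and> (let fin1 = (\<lambda>x. if x \<in> X then f x else fin \<sigma> x);
               cur1 = (cur \<sigma>)(s := f s);
               D = (\<lambda>k. {x \<in> sets1 k. cur1 x \<noteq> fin1 x});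
               cur2 = (\<lambda>x. if \<exists>k\<le>L. pick k = Some x then fin1 x else cur1 x)
           in (\<forall>k. (pick k = None) \<longleftrightarrow> (k > L \<or> stat1 k \<noteq> Migr \<or> D k = {})) \<and>
              (\<forall>k x. pick k = Some x \<longrightarrow> x \<in> D k \<and> (\<forall>y\<in>D k. fin1 y \<le> fin1 x)) \<and>
              \<sigma>' = \<lparr> lev = L, sets = sets1,
                     stat = (\<lambda>k. if stat1 k = Migr \<and> (\<forall>x\<in>sets1 k. cur2 x = fin1 x)
                                 then Full else stat1 k),
                     cur = cur2, fin = fin1 \<rparr>)"
    using st unfolding insert_step_def Let_def i_def L_def X_def sets1_def stat1_def
    by (rule conjunct2)
  then obtain t f pick where H: "let fin1 = (\<lambda>x. if x \<in> X then f x else fin \<sigma> x);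
               cur1 = (cur \<sigma>)(s := f s);
               D = (\<lambda>k. {x \<in> sets1 k. cur1 x \<noteq> fin1 x});
               cur2 = (\<lambda>x. if \<exists>k\<le>L. pick k = Some x then fin1 x else cur1 x)
           in (\<forall>k. (pick k = None) \<longleftrightarrow> (k > L \<or> stat1 k \<noteq> Migr \<or> D k = {})) \<and>
              (\<forall>k x. pick k = Some x \<longrightarrow> x \<in> D k \<and> (\<forall>y\<in>D k. fin1 y \<le> fin1 x)) \<and>
              \<sigma>' = \<lparr> lev = L, sets = sets1,
                     stat = (\<lambda>k. if stat1 k = Migr \<and> (\<forall>x\<in>sets1 k. cur2 x = fin1 x)
                                 then Full else stat1 k),
                     cur = cur2, fin = fin1 \<rparr>" by blast
  define fin1 where "fin1 = (\<lambda>x. if x \<in> X then f x else fin \<sigma> x)"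
  define cur1 where "cur1 = (cur \<sigma>)(s := f s)"
  define D where "D = (\<lambda>k. {x \<in> sets1 k. cur1 x \<noteq> fin1 x})"
  define cur2 where "cur2 = (\<lambda>x. if \<exists>k\<le>L. pick k = Some x then fin1 x else cur1 x)"
  have HH: "(\<forall>k. (pick k = None) \<longleftrightarrow> (k > L \<or> stat1 k \<noteq> Migr \<or> D k = {})) \<and>
              (\<forall>k x. pick k = Some x \<longrightarrow> x \<in> D k \<and> (\<forall>y\<in>D k. fin1 y \<le> fin1 x)) \<and>
              \<sigma>' = \<lparr> lev = L, sets = sets1,
                     stat = (\<lambda>k. if stat1 k = Migr \<and> (\<forall>x\<in>sets1 k. cur2 x = fin1 x)
                                 then Full else stat1 k),
                     cur = cur2, fin = fin1 \<rparr>"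
    using H unfolding Let_def fin1_def cur1_def D_def cur2_def by assumption
  have pN: "\<And>k. (pick k = None) \<longleftrightarrow> (k > L \<or> stat1 k \<noteq> Migr \<or> D k = {})"
    using HH by blast
  have pS: "\<And>k x. pick k = Some x \<Longrightarrow> x \<in> D k"
    using HH by blast
  have sig: "\<sigma>' = \<lparr> lev = L, sets = sets1,
                     stat = (\<lambda>k. if stat1 k = Migr \<and> (\<forall>x\<in>sets1 k. cur2 x = fin1 x)
                                 then Full else stat1 k),
                     cur = cur2, fin = fin1 \<rparr>"
    using HH by (rule conjunct2[THEN conjunct2])
  have I1: "\<And>j. stat \<sigma> j = Empty \<Longrightarrow> sets \<sigma> j = {}"
   and I2: "\<And>j. stat \<sigma> j \<noteq> Empty \<Longrightarrow> finite (sets \<sigma> j) \<and> card (sets \<sigma> j) = 2^j"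
   and I3: "\<And>j. lev \<sigma> < j \<Longrightarrow> stat \<sigma> j = Empty"
   and I4: "\<And>j k. j \<noteq> k \<Longrightarrow> sets \<sigma> j \<inter> sets \<sigma> k = {}"
   and I5: "\<And>j. stat \<sigma> j = Migr \<Longrightarrow> wrong \<sigma> j \<noteq> {} \<and>
        card (wrong \<sigma> j) + (\<Sum>k<j. card (sets \<sigma> k)) < 2^j"
    using inv unfolding Inv_def by blast+
  have fin_all: "\<And>j. finite (sets \<sigma> j)" using I1 I2 by (metis finite.emptyI)
  have ibelow: "\<And>k. k < i \<Longrightarrow> stat \<sigma> k \<noteq> Empty" using fe_below i_def by blast
  have iat: "stat \<sigma> i = Empty" using fe_at[of \<sigma>] I3 i_def by blast
  have ile: "i \<le> Suc (lev \<sigma>)" using fe_le i_def by blast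
  have s_out: "\<And>k. s \<notin> sets \<sigma> k"
  proof -
    fix k show "s \<notin> sets \<sigma> k"
    proof (cases "k \<le> lev \<sigma>")
      case True then show ?thesis using sn by (auto simp: objs_def)
    next
      case False then show ?thesis using I3 I1 by force
    qed
  qed
  have cardU: "card (\<Union>j<i. sets \<sigma> j) = (\<Sum>k<i. card (sets \<sigma> k))"
    using fin_all I4 by (intro card_UN_disjoint) auto
  have sU: "s \<notin> (\<Union>j<i. sets \<sigma> j)" using s_out by blast
  have cardX2: "card X = Suc (\<Sum>k<i. card (sets \<sigma> k))"
    unfolding X_def using sU fin_all cardU by simp
  have cardX: "card X = 2^i" and finX: "finite X"
  proof -
    have "(\<Sum>k<i. card (sets \<sigma> k)) = (\<Sum>k<i. 2^k)"
      using I2 ibelow by (intro sum.cong) auto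
    moreover have "s \<notin> (\<Union>j<i. sets \<sigma> j)" using s_out by blast
    moreover have "finite (\<Union>j<i. sets \<sigma> j)" using fin_all by blast
    ultimately show "card X = 2^i" "finite X" unfolding X_def using cardU sum_pow2[of i] by auto
  qed
  have sumS: "\<And>j. i < j \<Longrightarrow> (\<Sum>k<j. card (sets1 k)) = Suc (\<Sum>k<j. card (sets \<sigma> k))"
  proof -
    fix j assume "i < j"
    hence "Suc i \<le> j" by simp
    then show "(\<Sum>k<j. card (sets1 k)) = Suc (\<Sum>k<j. card (sets \<sigma> k))"
    proof (induction j rule: dec_induct)
      case base
      have "(\<Sum>k<i. card (sets1 k)) = 0" by (simp add: sets1_def)
      moreover have "sets \<sigma> i = {}" using I1 iat by blast
      ultimately show ?case using cardX2 by (simp add: sets1_def)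
    next
      case (step n) then show ?case by (simp add: sets1_def)
    qed
  qed
  define stat' where "stat' = (\<lambda>k. if stat1 k = Migr \<and> (\<forall>x\<in>sets1 k. cur2 x = fin1 x) then Full else stat1 k)"
  have sig': "\<sigma>' = \<lparr>lev = L, sets = sets1, stat = stat', cur = cur2, fin = fin1\<rparr>"
    using sig stat'_def by simp
  have F1: "\<forall>j. stat' j = Empty \<longrightarrow> sets1 j = {}"
    using I1 by (auto simp: stat'_def stat1_def sets1_def split: if_splits)
  have finS1: "\<And>j. finite (sets1 j)" using finX fin_all by (simp add: sets1_def)
  have F2: "\<forall>j. stat' j \<noteq> Empty \<longrightarrow> finite (sets1 j) \<and> card (sets1 j) = 2^j"
    using I2 cardX finX by (auto simp: stat'_def stat1_def sets1_def split: if_splits)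
  have F3: "\<forall>j. L < j \<longrightarrow> stat' j = Empty"
    using I3 by (auto simp: stat'_def stat1_def L_def split: if_splits)
  have XD: "\<And>k. i < k \<Longrightarrow> X \<inter> sets \<sigma> k = {}"
  proof -
    fix k assume "i < k"
    hence "\<forall>j<i. sets \<sigma> j \<inter> sets \<sigma> k = {}" using I4 by auto
    thus "X \<inter> sets \<sigma> k = {}" using s_out unfolding X_def by blast
  qed
  have F4: "\<forall>j k. j \<noteq> k \<longrightarrow> sets1 j \<inter> sets1 k = {}"
  proof (intro allI impI)
    fix j k :: nat assume "j \<noteq> k"
    show "sets1 j \<inter> sets1 k = {}"
      using XD[of j] XD[of k] I4[OF \<open>j \<noteq> k\<close>] \<open>j \<noteq> k\<close>
      by (auto simp: sets1_def)
  qed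
  have F5: "\<forall>j. stat' j = Migr \<longrightarrow> {x \<in> sets1 j. cur2 x \<noteq> fin1 x} \<noteq> {} \<and>
        card {x \<in> sets1 j. cur2 x \<noteq> fin1 x} + (\<Sum>k<j. card (sets1 k)) < 2^j"
  proof (intro allI impI)
    fix j assume m: "stat' j = Migr"
    let ?W = "{x \<in> sets1 j. cur2 x \<noteq> fin1 x}"
    have m1: "stat1 j = Migr" and nall: "\<not> (\<forall>x\<in>sets1 j. cur2 x = fin1 x)"
      using m by (auto simp: stat'_def split: if_splits)
    have ij: "i \<le> j" using m1 by (auto simp: stat1_def split: if_splits)
    have jL: "j \<le> L"
    proof (cases "j = i")
      case False
      with ij m1 have "stat \<sigma> j = Migr" by (auto simp: stat1_def)
      hence "j \<le> lev \<sigma>" using I3[of j] by (metis not_le status.distinct(3))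
      thus ?thesis by (simp add: L_def)
    qed (simp add: L_def)
    have Wne: "?W \<noteq> {}" using nall by blast
    have WD: "?W \<subseteq> D j" by (auto simp: D_def cur2_def split: if_splits)
    have "D j \<noteq> {}" using Wne WD by blast
    then obtain x0 where x0: "pick j = Some x0" using pN[of j] m1 jL by (cases "pick j") auto
    have x0D: "x0 \<in> D j" using pS[OF x0] .
    have "cur2 x0 = fin1 x0" using x0 jL by (auto simp: cur2_def)
    hence "?W \<subset> D j" using WD x0D by blast
    moreover have finD: "finite (D j)" using finS1[of j] by (simp add: D_def)
    ultimately have lt: "card ?W < card (D j)" by (rule psubset_card_mono[rotated])
    show "?W \<noteq> {} \<and> card ?W + (\<Sum>k<j. card (sets1 k)) < 2^j"
    proof (cases "j = i")
      case True
      have "D i \<subseteq> X - {s}" by (auto simp: D_def sets1_def cur1_def fin1_def X_def)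
      hence "card (D i) \<le> card (X - {s})" using finX by (intro card_mono) auto
      also have "\<dots> = 2^i - 1" proof -
        have "s \<in> X" by (simp add: X_def)
        thus ?thesis using cardX finX by (simp add: card_Diff_singleton)
      qed
      finally have "card (D i) \<le> 2^i - 1" .
      moreover have "(\<Sum>k<i. card (sets1 k)) = 0" by (simp add: sets1_def)
      ultimately show ?thesis using lt Wne True by simp
    next
      case False
      with ij have gt: "i < j" by simp
      with m1 have mj: "stat \<sigma> j = Migr" by (auto simp: stat1_def)
      have "D j = wrong \<sigma> j"
        using XD[OF gt] s_out[of j] gt
        by (auto simp: D_def wrong_def sets1_def cur1_def fin1_def)
      with lt I5[OF mj] sumS[OF gt] Wne show ?thesis by simp
    qed
  qed
  show ?thesis unfolding Inv_def sig' wrong_def using F1 F2 F3 F4 F5 by simp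
qed

theorem mainTheorem8:
  fixes rel :: "'q \<Rightarrow> 'a \<Rightarrow> bool"
    and gamma :: "nat \<Rightarrow> nat"
    and C :: "nat \<Rightarrow> nat \<Rightarrow> int set"
    and n :: nat
  assumes "mono gamma"
    and "\<And>X :: 'a set. finite X \<Longrightarrow> \<exists>c. unimax rel X c \<and> card (c ` X) \<le> gamma (card X)"
    and "\<And>i t. finite (C i t) \<and> card (C i t) = gamma (2 ^ i)"
    and "reachable rel C n \<sigma>"
  shows "\<forall>j < first_empty \<sigma>. stat \<sigma> j = Full"
proof -
  have "(\<lambda>a b. \<exists>s. insert_step rel C s a b)\<^sup>*\<^sup>* (init_st n) \<sigma>"
    using assms(4) by (simp add: reachable_def)
  hence "Inv \<sigma>"
  proof (induction rule: rtranclp_induct)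
    case base then show ?case by (rule init_inv)
  next
    case (step y z) then obtain s where "insert_step rel C s y z" by blast
    with step.IH show ?case by (rule step_inv)
  qed
  thus ?thesis using inv_final by blast
qed

end
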